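(* For every multi-type resource allocation problem and every profile $R$ of strict linear orders over bundles, $\mathrm{MPS}(R)$ is sd-envy-free.
   Context: Setting: $N=\{1,\dots,n\}$ agents; $M=D_1\cup\dots\cup D_p$ items with pairwise disjoint types, $|D_i|=n$, unit supply; bundles $\mathcal D=D_1\times\dots\times D_p$; strict linear orders $\succ_j$ on $\mathcal D$. An assignment is an $n\times|\mathcal D|$ matrix $(p_{j,x})$ with entries in $[0,1]$, rows summing to $1$, and $\sum_j\sum_{x\ni o}p_{j,x}=1$ for each item $o$; row $P_j$ is agent $j$'s allocation. $U(\succ,x)=\{y:y\succ x\}\cup\{x\}$; $p$ weakly stochastically dominates $q$ w.r.t. $\succ$ if $\sum_{y\in U(\succ,x)}p_y\ge\sum_{y\in U(\succ,x)}q_y$ for all $x$. $P$ is sd-envy-free if for all agents $j,k$, $P_j$ weakly stochastically dominates $P_k$ w.r.t. $\succ_j$. MPS: items start with supply $1$; a bundle is available if all its items have positive remaining supply. Continuously in time each agent eats her most preferred available bundle at rate $1$ (each item in the bundle is consumed at rate $1$ and $p_{j,x}$ grows at rate $1$); exhausted items make all bundles containing them unavailable; the process runs until all items are exhausted; the accumulated matrix is $\mathrm{MPS}(R)$. *)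

theory Defs
  imports Complex_Main "HOL-Library.FuncSet"
begin

(* Agents are 0..n-1.  Item types are D 0, ..., D (p-1) (sets of items of type 'o).
   A bundle is an element of D_0 x ... x D_{p-1}, represented as an extensional
   function x with x i \<in> D i for i < p.  A preference of agent j is a relation
   R j where (y, x) \<in> R j means y \<succ>_j x.
   An allocation/assignment is P :: nat \<Rightarrow> (nat \<Rightarrow> 'o) \<Rightarrow> real, P j x = p_{j,x}. *)

definition bundles :: "nat \<Rightarrow> (nat \<Rightarrow> 'o set) \<Rightarrow> (nat \<Rightarrow> 'o) set" where
  "bundles p D = PiE {..<p} D"

definition items :: "nat \<Rightarrow> (nat \<Rightarrow> 'o set) \<Rightarrow> 'o set" where
  "items p D = (\<Union>i<p. D i)"

definition in_bundle :: "nat \<Rightarrow> 'o \<Rightarrow> (nat \<Rightarrow> 'o) \<Rightarrow> bool" where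
  "in_bundle p it x \<longleftrightarrow> (\<exists>i<p. x i = it)"

definition upper :: "(nat \<Rightarrow> 'o) set \<Rightarrow> ((nat \<Rightarrow> 'o) \<times> (nat \<Rightarrow> 'o)) set \<Rightarrow> (nat \<Rightarrow> 'o) \<Rightarrow> (nat \<Rightarrow> 'o) set" where
  "upper B r x = {y \<in> B. (y, x) \<in> r} \<union> {x}"

definition sd_weak_dom :: "(nat \<Rightarrow> 'o) set \<Rightarrow> ((nat \<Rightarrow> 'o) \<times> (nat \<Rightarrow> 'o)) set
    \<Rightarrow> ((nat \<Rightarrow> 'o) \<Rightarrow> real) \<Rightarrow> ((nat \<Rightarrow> 'o) \<Rightarrow> real) \<Rightarrow> bool" where
  "sd_weak_dom B r P Q \<longleftrightarrow> (\<forall>x\<in>B. (\<Sum>y\<in>upper B r x. P y) \<ge> (\<Sum>y\<in>upper B r x. Q y))"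

definition sd_envy_free :: "nat \<Rightarrow> nat \<Rightarrow> (nat \<Rightarrow> 'o set)
    \<Rightarrow> (nat \<Rightarrow> ((nat \<Rightarrow> 'o) \<times> (nat \<Rightarrow> 'o)) set) \<Rightarrow> (nat \<Rightarrow> (nat \<Rightarrow> 'o) \<Rightarrow> real) \<Rightarrow> bool" where
  "sd_envy_free n p D R P \<longleftrightarrow>
     (\<forall>j<n. \<forall>k<n. sd_weak_dom (bundles p D) (R j) (P j) (P k))"

(* ---------- Multi-type probabilistic serial (MPS) eating process ----------
   The continuous process is piecewise constant: between two consecutive
   exhaustion events every agent eats a fixed bundle. *)

definition available :: "nat \<Rightarrow> (nat \<Rightarrow> 'o set) \<Rightarrow> ('o \<Rightarrow> real) \<Rightarrow> (nat \<Rightarrow> 'o) set" where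
  "available p D s = {x \<in> bundles p D. \<forall>i<p. s (x i) > 0}"

definition top_of :: "((nat \<Rightarrow> 'o) \<times> (nat \<Rightarrow> 'o)) set \<Rightarrow> (nat \<Rightarrow> 'o) set \<Rightarrow> (nat \<Rightarrow> 'o)" where
  "top_of r A = (THE x. x \<in> A \<and> (\<forall>y\<in>A. y \<noteq> x \<longrightarrow> (x, y) \<in> r))"

definition eat_rate :: "nat \<Rightarrow> nat \<Rightarrow> (nat \<Rightarrow> 'o set)
    \<Rightarrow> (nat \<Rightarrow> ((nat \<Rightarrow> 'o) \<times> (nat \<Rightarrow> 'o)) set) \<Rightarrow> ('o \<Rightarrow> real) \<Rightarrow> 'o \<Rightarrow> real" where
  "eat_rate n p D R s it =
     real (card {j. j < n \<and> in_bundle p it (top_of (R j) (available p D s))})"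

(* one phase: run until the first item becomes exhausted *)
definition mps_step :: "nat \<Rightarrow> nat \<Rightarrow> (nat \<Rightarrow> 'o set)
    \<Rightarrow> (nat \<Rightarrow> ((nat \<Rightarrow> 'o) \<times> (nat \<Rightarrow> 'o)) set)
    \<Rightarrow> ('o \<Rightarrow> real) \<times> (nat \<Rightarrow> (nat \<Rightarrow> 'o) \<Rightarrow> real)
    \<Rightarrow> ('o \<Rightarrow> real) \<times> (nat \<Rightarrow> (nat \<Rightarrow> 'o) \<Rightarrow> real)" where
  "mps_step n p D R st =
     (let s = fst st; P = snd st;
          A = available p D s;
          c = eat_rate n p D R s;
          E = {it \<in> items p D. c it > 0}
      in if A = {} \<or> E = {} then st
         else (let \<delta> = Min ((\<lambda>it. s it / c it) ` E)
               in (\<lambda>it. s it - \<delta> * c it,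
                   \<lambda>j x. P j x + (if j < n \<and> x = top_of (R j) A then \<delta> else 0))))"

(* every phase exhausts at least one item, so |M| phases suffice *)
definition MPS :: "nat \<Rightarrow> nat \<Rightarrow> (nat \<Rightarrow> 'o set)
    \<Rightarrow> (nat \<Rightarrow> ((nat \<Rightarrow> 'o) \<times> (nat \<Rightarrow> 'o)) set) \<Rightarrow> (nat \<Rightarrow> (nat \<Rightarrow> 'o) \<Rightarrow> real)" where
  "MPS n p D R = snd ((mps_step n p D R ^^ card (items p D)) (\<lambda>_. 1, \<lambda>_ _. 0))"

end

theory Submission
  imports Defs
begin

lemma top_exists:
  assumes slo: "strict_linear_order_on B r" and fin: "finite A" and ne: "A \<noteq> {}" and sub: "A \<subseteq> B"
  shows "\<exists>t. t \<in> A \<and> (\<forall>y\<in>A. y \<noteq> t \<longrightarrow> (t, y) \<in> r)"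
  using fin ne sub
proof (induction A rule: finite_ne_induct)
  case (singleton a) then show ?case by auto
next
  case (insert a A)
  then obtain t where t: "t \<in> A" "\<forall>y\<in>A. y \<noteq> t \<longrightarrow> (t, y) \<in> r" by auto
  have tr: "trans r" and tot: "total_on B r" using slo by (auto simp: strict_linear_order_on_def)
  have aB: "a \<in> B" and tB: "t \<in> B" using insert t by auto
  have at: "a \<noteq> t" using insert t by auto
  show ?case
  proof (cases "(a, t) \<in> r")
    case True
    have "\<forall>y\<in>insert a A. y \<noteq> a \<longrightarrow> (a, y) \<in> r"
      proof (intro ballI impI)
      fix y assume y: "y \<in> insert a A" "y \<noteq> a"
      then have yA: "y \<in> A" by auto
      show "(a, y) \<in> r"
      proof (cases "y = t")
        case True then show ?thesis using \<open>(a, t) \<in> r\<close> by simp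
      next
        case False then have "(t, y) \<in> r" using t yA by auto
        then show ?thesis using \<open>(a, t) \<in> r\<close> tr by (meson transD)
      qed
    qed
    then show ?thesis by blast
  next
    case False
    then have "(t, a) \<in> r" using tot aB tB at by (auto simp: total_on_def)
    then have "\<forall>y\<in>insert a A. y \<noteq> t \<longrightarrow> (t, y) \<in> r" using t by auto
    then show ?thesis using t by blast
  qed
qed

lemma top_prop:
  assumes slo: "strict_linear_order_on B r" and fin: "finite A" and ne: "A \<noteq> {}" and sub: "A \<subseteq> B"
  shows "top_of r A \<in> A \<and> (\<forall>y\<in>A. y \<noteq> top_of r A \<longrightarrow> (top_of r A, y) \<in> r)"
proof -
  obtain t where t: "t \<in> A" "\<forall>y\<in>A. y \<noteq> t \<longrightarrow> (t, y) \<in> r"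
    using top_exists[OF assms] by blast
  have tr: "trans r" and ir: "irrefl r" using slo by (auto simp: strict_linear_order_on_def)
  have uniq: "u = t" if "u \<in> A" "\<forall>y\<in>A. y \<noteq> u \<longrightarrow> (u, y) \<in> r" for u
  proof (rule ccontr)
    assume "u \<noteq> t"
    then have "(u, t) \<in> r" "(t, u) \<in> r" using that t by auto
    then have "(u, u) \<in> r" using tr by (meson transD)
    then show False using ir by (auto simp: irrefl_def)
  qed
  have "top_of r A = t" unfolding top_of_def
    using t uniq by (intro the_equality) blast+
  then show ?thesis using t by simp
qed

lemma step_inv:
  fixes n p :: nat and D :: "nat \<Rightarrow> 'o set"
    and R :: "nat \<Rightarrow> ((nat \<Rightarrow> 'o) \<times> (nat \<Rightarrow> 'o)) set"
  assumes finD: "\<forall>i<p. finite (D i)"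
    and slo: "\<forall>j<n. strict_linear_order_on (bundles p D) (R j)"
    and j: "j < n" and k: "k < n" and xB: "x \<in> bundles p D"
    and inv: "sum (snd st k) (upper (bundles p D) (R j) x) \<le> sum (snd st j) (upper (bundles p D) (R j) x)"
  shows "sum (snd (mps_step n p D R st) k) (upper (bundles p D) (R j) x)
       \<le> sum (snd (mps_step n p D R st) j) (upper (bundles p D) (R j) x)"
proof -
  define B where "B = bundles p D"
  define U where "U = upper B (R j) x"
  have finB: "finite B" unfolding B_def bundles_def using finD by (intro finite_PiE) auto
  have finU: "finite U" unfolding U_def upper_def using finB by auto
  define s where "s = fst st"
  define P where "P = snd st"
  define A where "A = available p D s"
  define c where "c = eat_rate n p D R s"
  define E where "E = {it \<in> items p D. c it > 0}"
  have AB: "A \<subseteq> B" unfolding A_def available_def B_def by auto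
  have finA: "finite A" using finB AB finite_subset by blast
  show ?thesis
  proof (cases "A = {} \<or> E = {}")
    case True
    then have "mps_step n p D R st = st"
      unfolding mps_step_def Let_def A_def E_def c_def s_def by auto
    then show ?thesis using inv by simp
  next
    case False
    then have Ane: "A \<noteq> {}" and Ene: "E \<noteq> {}" by auto
    have top: "\<And>j'. j' < n \<Longrightarrow> top_of (R j') A \<in> A \<and> (\<forall>y\<in>A. y \<noteq> top_of (R j') A \<longrightarrow> (top_of (R j') A, y) \<in> R j')"
      using top_prop slo finA Ane AB unfolding B_def by blast
    define \<delta> where "\<delta> = Min ((\<lambda>it. s it / c it) ` E)"
    have finI: "finite (items p D)" unfolding items_def using finD by auto
    have finE: "finite E" unfolding E_def using finI by auto
    have "\<delta> \<in> (\<lambda>it. s it / c it) ` E" unfolding \<delta>_def using finE Ene by (intro Min_in) auto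
    then obtain it where it: "it \<in> E" "\<delta> = s it / c it" by auto
    have cpos: "c it > 0" using it unfolding E_def by auto
    then have "{j. j < n \<and> in_bundle p it (top_of (R j) A)} \<noteq> {}"
      unfolding c_def eat_rate_def A_def by (metis card.empty of_nat_0 less_irrefl)
    then obtain j' where j': "j' < n" "in_bundle p it (top_of (R j') A)" by auto
    then obtain i where i: "i < p" "top_of (R j') A i = it" unfolding in_bundle_def by auto
    have "top_of (R j') A \<in> A" using top j' by blast
    then have "s it > 0" using i unfolding A_def available_def by auto
    then have dpos: "\<delta> \<ge> 0" using it cpos by simp
    have step: "mps_step n p D R st = (\<lambda>it. s it - \<delta> * c it,
                   \<lambda>j x. P j x + (if j < n \<and> x = top_of (R j) A then \<delta> else 0))"
      using False unfolding mps_step_def Let_def A_def E_def c_def s_def P_def \<delta>_def by auto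
    have sumeq: "\<And>j'. j' < n \<Longrightarrow> sum (\<lambda>y. P j' y + (if j' < n \<and> y = top_of (R j') A then \<delta> else 0)) U
        = sum (P j') U + (if top_of (R j') A \<in> U then \<delta> else 0)"
      using finU by (simp add: sum.distrib)
    have key: "top_of (R k) A \<in> U \<Longrightarrow> top_of (R j) A \<in> U"
    proof -
      assume tk: "top_of (R k) A \<in> U"
      define tj where "tj = top_of (R j) A"
      define tk' where "tk' = top_of (R k) A"
      have tjA: "tj \<in> A" and tjmax: "\<forall>y\<in>A. y \<noteq> tj \<longrightarrow> (tj, y) \<in> R j" using top[OF j] tj_def by auto
      have tkA: "tk' \<in> A" using top[OF k] tk'_def by auto
      have tr: "trans (R j)" using slo j by (auto simp: strict_linear_order_on_def)
      have tjB: "tj \<in> B" using tjA AB by auto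
      show ?thesis
      proof (cases "tj = tk'")
        case True then show ?thesis using tk tj_def tk'_def by simp
      next
        case False
        then have r1: "(tj, tk') \<in> R j" using tjmax tkA by auto
        have "tk' = x \<or> (tk', x) \<in> R j" using tk tk'_def unfolding U_def upper_def by auto
        then have "(tj, x) \<in> R j" using r1 tr by (meson transD)
        then show ?thesis using tjB unfolding tj_def U_def upper_def by auto
      qed
    qed
    have invP: "sum (P k) U \<le> sum (P j) U" using inv unfolding P_def U_def B_def by simp
    show ?thesis
      unfolding step snd_conv B_def[symmetric] U_def[symmetric]
      using sumeq[OF j] sumeq[OF k] key invP dpos by auto
  qed
qed

theorem proposition2:
  fixes n p :: nat and D :: "nat \<Rightarrow> 'o set"
    and R :: "nat \<Rightarrow> ((nat \<Rightarrow> 'o) \<times> (nat \<Rightarrow> 'o)) set"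
  assumes "\<forall>i<p. finite (D i) \<and> card (D i) = n"
    and "\<forall>i<p. \<forall>i'<p. i \<noteq> i' \<longrightarrow> D i \<inter> D i' = {}"
    and "\<forall>j<n. strict_linear_order_on (bundles p D) (R j)"
  shows "sd_envy_free n p D R (MPS n p D R)"
  unfolding sd_envy_free_def sd_weak_dom_def
proof (intro allI impI ballI)
  fix j k x assume j: "j < n" and k: "k < n" and xB: "x \<in> bundles p D"
  have finD: "\<forall>i<p. finite (D i)" using assms(1) by auto
  have "\<And>m. sum (snd ((mps_step n p D R ^^ m) (\<lambda>_. 1, \<lambda>_ _. 0)) k) (upper (bundles p D) (R j) x)
       \<le> sum (snd ((mps_step n p D R ^^ m) (\<lambda>_. 1, \<lambda>_ _. 0)) j) (upper (bundles p D) (R j) x)"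
  proof -
    fix m show "?thesis m"
    proof (induction m)
      case 0 then show ?case by simp
    next
      case (Suc m)
      then show ?case using step_inv[OF finD assms(3) j k xB] by simp
    qed
  qed
  then show "sum (MPS n p D R k) (upper (bundles p D) (R j) x) \<le> sum (MPS n p D R j) (upper (bundles p D) (R j) x)"
    unfolding MPS_def by blast
qed

end
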